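(* For any strong algebra $\mathcal{A}=(A,\le,\otimes,e,\to_{\mathcal{A}})$ there exist a non-commutative spacetime $\mathcal{S}=(\mathscr{X},\nabla)$, a monotone map $F:\mathscr{X}\to\mathscr{X}$ and a strict monoidal order embedding $i:(A,\le,\otimes,e)\to\mathscr{X}$ such that $i(a\to_{\mathcal{A}}b)=F(i(a))\to_{\mathcal{S}}F(i(b))$ for all $a,b\in A$.
   Context: A monoidal poset $(A,\le,\otimes,e)$ is a poset with a monoid structure whose multiplication is monotone in each argument. An implication on it is a function $\to:A^{op}\times A\to A$ (antitone in the first, monotone in the second argument) with $e\le a\to a$ and $(a\to b)\otimes(b\to c)\le a\to c$ for all $a,b,c$; a strong algebra is a monoidal poset with an implication. A quantale is a monoidal poset with all joins whose multiplication distributes over arbitrary joins in each argument. A non-commutative spacetime is $(\mathscr{X},\nabla)$ with $\mathscr{X}$ a quantale and $\nabla$ join preserving and oplax monoidal ($\nabla e\le e$, $\nabla(a\otimes b)\le\nabla a\otimes\nabla b$). Its implication $\to_{\mathcal{S}}$ is $a\to_{\mathcal{S}}b=\Box(a\Rightarrow b)$, where $\Box$ is the right adjoint of $\nabla$ and $\Rightarrow$ the right adjoint of $a\otimes(-)$; equivalently $a\otimes\nabla b\le c$ iff $b\le a\to_{\mathcal{S}}c$. A strict monoidal order embedding is a map $i$ with $i(e)=e$, $i(a\otimes b)=i(a)\otimes i(b)$ and $a\le b\iff i(a)\le i(b)$. *)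

theory Defs
  imports Main
begin

definition partial_order_on' :: "'a set \<Rightarrow> ('a \<Rightarrow> 'a \<Rightarrow> bool) \<Rightarrow> bool" where
  "partial_order_on' A le \<longleftrightarrow>
     (\<forall>a\<in>A. le a a) \<and>
     (\<forall>a\<in>A. \<forall>b\<in>A. \<forall>c\<in>A. le a b \<longrightarrow> le b c \<longrightarrow> le a c) \<and>
     (\<forall>a\<in>A. \<forall>b\<in>A. le a b \<longrightarrow> le b a \<longrightarrow> a = b)"

definition monoidal_poset ::
  "'a set \<Rightarrow> ('a \<Rightarrow> 'a \<Rightarrow> bool) \<Rightarrow> ('a \<Rightarrow> 'a \<Rightarrow> 'a) \<Rightarrow> 'a \<Rightarrow> bool" where
  "monoidal_poset A le m e \<longleftrightarrow>
     partial_order_on' A le \<and>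
     e \<in> A \<and> (\<forall>a\<in>A. \<forall>b\<in>A. m a b \<in> A) \<and>
     (\<forall>a\<in>A. \<forall>b\<in>A. \<forall>c\<in>A. m (m a b) c = m a (m b c)) \<and>
     (\<forall>a\<in>A. m e a = a \<and> m a e = a) \<and>
     (\<forall>a\<in>A. \<forall>a'\<in>A. \<forall>b\<in>A. le a a' \<longrightarrow> le (m a b) (m a' b) \<and> le (m b a) (m b a'))"

definition strong_algebra ::
  "'a set \<Rightarrow> ('a \<Rightarrow> 'a \<Rightarrow> bool) \<Rightarrow> ('a \<Rightarrow> 'a \<Rightarrow> 'a) \<Rightarrow> 'a \<Rightarrow> ('a \<Rightarrow> 'a \<Rightarrow> 'a) \<Rightarrow> bool" where
  "strong_algebra A le m e imp \<longleftrightarrow>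
     monoidal_poset A le m e \<and>
     (\<forall>a\<in>A. \<forall>b\<in>A. imp a b \<in> A) \<and>
     (\<forall>a\<in>A. \<forall>a'\<in>A. \<forall>b\<in>A. le a a' \<longrightarrow> le (imp a' b) (imp a b)) \<and>
     (\<forall>a\<in>A. \<forall>b\<in>A. \<forall>b'\<in>A. le b b' \<longrightarrow> le (imp a b) (imp a b')) \<and>
     (\<forall>a\<in>A. le e (imp a a)) \<and>
     (\<forall>a\<in>A. \<forall>b\<in>A. \<forall>c\<in>A. le (m (imp a b) (imp b c)) (imp a c))"

definition is_lub :: "'a set \<Rightarrow> ('a \<Rightarrow> 'a \<Rightarrow> bool) \<Rightarrow> 'a set \<Rightarrow> 'a \<Rightarrow> bool" where
  "is_lub X le S s \<longleftrightarrow> s \<in> X \<and> (\<forall>x\<in>S. le x s) \<and> (\<forall>u\<in>X. (\<forall>x\<in>S. le x u) \<longrightarrow> le s u)"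

definition quantale ::
  "'a set \<Rightarrow> ('a \<Rightarrow> 'a \<Rightarrow> bool) \<Rightarrow> ('a \<Rightarrow> 'a \<Rightarrow> 'a) \<Rightarrow> 'a \<Rightarrow> bool" where
  "quantale X le m e \<longleftrightarrow>
     monoidal_poset X le m e \<and>
     (\<forall>S. S \<subseteq> X \<longrightarrow> (\<exists>s. is_lub X le S s)) \<and>
     (\<forall>a\<in>X. \<forall>S s. S \<subseteq> X \<longrightarrow> is_lub X le S s \<longrightarrow>
        is_lub X le ((\<lambda>x. m a x) ` S) (m a s) \<and> is_lub X le ((\<lambda>x. m x a) ` S) (m s a))"

definition nc_spacetime ::
  "'a set \<Rightarrow> ('a \<Rightarrow> 'a \<Rightarrow> bool) \<Rightarrow> ('a \<Rightarrow> 'a \<Rightarrow> 'a) \<Rightarrow> 'a \<Rightarrow> ('a \<Rightarrow> 'a) \<Rightarrow> bool" where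
  "nc_spacetime X le m e nabla \<longleftrightarrow>
     quantale X le m e \<and>
     (\<forall>x\<in>X. nabla x \<in> X) \<and>
     (\<forall>S s. S \<subseteq> X \<longrightarrow> is_lub X le S s \<longrightarrow> is_lub X le (nabla ` S) (nabla s)) \<and>
     le (nabla e) e \<and>
     (\<forall>a\<in>X. \<forall>b\<in>X. le (nabla (m a b)) (m (nabla a) (nabla b)))"

text \<open>Right adjoints: box (of nabla) and the residual (of a \<otimes> -).\<close>
definition st_box :: "'a set \<Rightarrow> ('a \<Rightarrow> 'a \<Rightarrow> bool) \<Rightarrow> ('a \<Rightarrow> 'a) \<Rightarrow> 'a \<Rightarrow> 'a" where
  "st_box X le nabla x = (THE y. y \<in> X \<and> le (nabla y) x \<and> (\<forall>z\<in>X. le (nabla z) x \<longrightarrow> le z y))"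

definition st_res :: "'a set \<Rightarrow> ('a \<Rightarrow> 'a \<Rightarrow> bool) \<Rightarrow> ('a \<Rightarrow> 'a \<Rightarrow> 'a) \<Rightarrow> 'a \<Rightarrow> 'a \<Rightarrow> 'a" where
  "st_res X le m a b = (THE y. y \<in> X \<and> le (m a y) b \<and> (\<forall>z\<in>X. le (m a z) b \<longrightarrow> le z y))"

definition st_imp ::
  "'a set \<Rightarrow> ('a \<Rightarrow> 'a \<Rightarrow> bool) \<Rightarrow> ('a \<Rightarrow> 'a \<Rightarrow> 'a) \<Rightarrow> ('a \<Rightarrow> 'a) \<Rightarrow> 'a \<Rightarrow> 'a \<Rightarrow> 'a" where
  "st_imp X le m nabla a b = st_box X le nabla (st_res X le m a b)"

definition strict_monoidal_order_embedding ::
  "'a set \<Rightarrow> ('a \<Rightarrow> 'a \<Rightarrow> bool) \<Rightarrow> ('a \<Rightarrow> 'a \<Rightarrow> 'a) \<Rightarrow> 'a \<Rightarrow>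
   'b set \<Rightarrow> ('b \<Rightarrow> 'b \<Rightarrow> bool) \<Rightarrow> ('b \<Rightarrow> 'b \<Rightarrow> 'b) \<Rightarrow> 'b \<Rightarrow> ('a \<Rightarrow> 'b) \<Rightarrow> bool" where
  "strict_monoidal_order_embedding A leA mA eA X leX mX eX i \<longleftrightarrow>
     (\<forall>a\<in>A. i a \<in> X) \<and> i eA = eX \<and>
     (\<forall>a\<in>A. \<forall>b\<in>A. i (mA a b) = mX (i a) (i b)) \<and>
     (\<forall>a\<in>A. \<forall>b\<in>A. leA a b \<longleftrightarrow> leX (i a) (i b))"

end

theory Submission
  imports Defs
begin

definition DS :: "'b set \<Rightarrow> ('b \<Rightarrow> 'b \<Rightarrow> bool) \<Rightarrow> 'b set set" where
  "DS M le = {U. U \<subseteq> M \<and> (\<forall>x\<in>U. \<forall>y\<in>M. le y x \<longrightarrow> y \<in> U)}"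

definition dmul :: "'b set \<Rightarrow> ('b \<Rightarrow> 'b \<Rightarrow> bool) \<Rightarrow> ('b \<Rightarrow> 'b \<Rightarrow> 'b) \<Rightarrow> 'b set \<Rightarrow> 'b set \<Rightarrow> 'b set" where
  "dmul M le mul U V = {z\<in>M. \<exists>x\<in>U. \<exists>y\<in>V. le z (mul x y)}"

definition dunit :: "'b set \<Rightarrow> ('b \<Rightarrow> 'b \<Rightarrow> bool) \<Rightarrow> 'b \<Rightarrow> 'b set" where
  "dunit M le one = {z\<in>M. le z one}"

lemma mp_facts:
  assumes "monoidal_poset M le mul one"
  shows "\<And>a. a\<in>M \<Longrightarrow> le a a"
    and "\<And>a b c. a\<in>M \<Longrightarrow> b\<in>M \<Longrightarrow> c\<in>M \<Longrightarrow> le a b \<Longrightarrow> le b c \<Longrightarrow> le a c"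
    and "\<And>a b. a\<in>M \<Longrightarrow> b\<in>M \<Longrightarrow> le a b \<Longrightarrow> le b a \<Longrightarrow> a = b"
    and "one \<in> M" and "\<And>a b. a\<in>M \<Longrightarrow> b\<in>M \<Longrightarrow> mul a b \<in> M"
    and "\<And>a b c. a\<in>M \<Longrightarrow> b\<in>M \<Longrightarrow> c\<in>M \<Longrightarrow> mul (mul a b) c = mul a (mul b c)"
    and "\<And>a. a\<in>M \<Longrightarrow> mul one a = a" and "\<And>a. a\<in>M \<Longrightarrow> mul a one = a"
    and "\<And>a a' b. a\<in>M \<Longrightarrow> a'\<in>M \<Longrightarrow> b\<in>M \<Longrightarrow> le a a' \<Longrightarrow> le (mul a b) (mul a' b)"
    and "\<And>a a' b. a\<in>M \<Longrightarrow> a'\<in>M \<Longrightarrow> b\<in>M \<Longrightarrow> le a a' \<Longrightarrow> le (mul b a) (mul b a')"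
proof -
  note C = assms[unfolded monoidal_poset_def partial_order_on'_def]
  have P1: "\<forall>a\<in>M. le a a" using C by (elim conjE) assumption
  have P2: "\<forall>a\<in>M. \<forall>b\<in>M. \<forall>c\<in>M. le a b \<longrightarrow> le b c \<longrightarrow> le a c" using C by (elim conjE) assumption
  have P3: "\<forall>a\<in>M. \<forall>b\<in>M. le a b \<longrightarrow> le b a \<longrightarrow> a = b" using C by (elim conjE) assumption
  have P4: "one \<in> M" using C by (elim conjE) assumption
  have P5: "\<forall>a\<in>M. \<forall>b\<in>M. mul a b \<in> M" using C by (elim conjE) assumption
  have P6: "\<forall>a\<in>M. \<forall>b\<in>M. \<forall>c\<in>M. mul (mul a b) c = mul a (mul b c)" using C by (elim conjE) assumption
  have P7: "\<forall>a\<in>M. mul one a = a \<and> mul a one = a" using C by (elim conjE) assumption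
  have P8: "\<forall>a\<in>M. \<forall>a'\<in>M. \<forall>b\<in>M. le a a' \<longrightarrow> le (mul a b) (mul a' b) \<and> le (mul b a) (mul b a')" using C by (elim conjE) assumption
  show "\<And>a. a\<in>M \<Longrightarrow> le a a" using P1 by simp
  show "\<And>a b c. a\<in>M \<Longrightarrow> b\<in>M \<Longrightarrow> c\<in>M \<Longrightarrow> le a b \<Longrightarrow> le b c \<Longrightarrow> le a c" using P2 by blast
  show "\<And>a b. a\<in>M \<Longrightarrow> b\<in>M \<Longrightarrow> le a b \<Longrightarrow> le b a \<Longrightarrow> a = b" using P3 by blast
  show "one \<in> M" by fact
  show "\<And>a b. a\<in>M \<Longrightarrow> b\<in>M \<Longrightarrow> mul a b \<in> M" using P5 by blast
  show "\<And>a b c. a\<in>M \<Longrightarrow> b\<in>M \<Longrightarrow> c\<in>M \<Longrightarrow> mul (mul a b) c = mul a (mul b c)" using P6 by blast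
  show "\<And>a. a\<in>M \<Longrightarrow> mul one a = a" using P7 by blast
  show "\<And>a. a\<in>M \<Longrightarrow> mul a one = a" using P7 by blast
  show "\<And>a a' b. a\<in>M \<Longrightarrow> a'\<in>M \<Longrightarrow> b\<in>M \<Longrightarrow> le a a' \<Longrightarrow> le (mul a b) (mul a' b)" using P8 by blast
  show "\<And>a a' b. a\<in>M \<Longrightarrow> a'\<in>M \<Longrightarrow> b\<in>M \<Longrightarrow> le a a' \<Longrightarrow> le (mul b a) (mul b a')" using P8 by blast
qed

lemma lub_union: assumes "S \<subseteq> DS M le" shows "is_lub (DS M le) (\<subseteq>) S (\<Union>S)"
proof -
  have "\<Union>S \<in> DS M le" unfolding DS_def
  proof (intro CollectI conjI ballI impI)
    show "\<Union>S \<subseteq> M" using assms unfolding DS_def by blast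
  next
    fix x y assume "x \<in> \<Union>S" "y \<in> M" "le y x"
    then obtain U where "U \<in> S" "x \<in> U" by blast
    then have "y \<in> U" using assms \<open>y \<in> M\<close> \<open>le y x\<close> unfolding DS_def by blast
    then show "y \<in> \<Union>S" using \<open>U \<in> S\<close> by blast
  qed
  then show ?thesis unfolding is_lub_def by (intro conjI) auto
qed

lemma lub_unique: assumes "is_lub X (\<subseteq>) S s" "is_lub X (\<subseteq>) S t" shows "s = t"
proof -
  have "s \<in> X" "t \<in> X" "\<forall>x\<in>S. x \<subseteq> s" "\<forall>x\<in>S. x \<subseteq> t"
    "\<forall>u\<in>X. (\<forall>x\<in>S. x \<subseteq> u) \<longrightarrow> s \<subseteq> u" "\<forall>u\<in>X. (\<forall>x\<in>S. x \<subseteq> u) \<longrightarrow> t \<subseteq> u"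
    using assms unfolding is_lub_def by simp_all
  then have "s \<subseteq> t" "t \<subseteq> s" by simp_all
  then show ?thesis by (rule subset_antisym)
qed

lemma lub_eq: "S \<subseteq> DS M le \<Longrightarrow> is_lub (DS M le) (\<subseteq>) S s \<Longrightarrow> s = \<Union>S"
  using lub_unique lub_union by blast

lemma dmul_DS:
  assumes mp: "monoidal_poset M le mul one" and "U \<subseteq> M" "V \<subseteq> M"
  shows "dmul M le mul U V \<in> DS M le"
proof -
  note f = mp_facts[OF mp]
  show ?thesis unfolding DS_def dmul_def
  proof (safe)
    fix z x y w assume "z \<in> M" "x \<in> U" "y \<in> V" "le z (mul x y)" "w \<in> M" "le w z"
    then show "\<exists>x\<in>U. \<exists>y\<in>V. le w (mul x y)" using f(2)[of w z "mul x y"] f(5) assms(2,3) by blast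
  qed
qed

lemma dunit_DS:
  assumes mp: "monoidal_poset M le mul one"
  shows "dunit M le one \<in> DS M le"
  using mp_facts[OF mp] unfolding DS_def dunit_def by blast

lemma dmul_I: "z \<in> M \<Longrightarrow> x \<in> U \<Longrightarrow> y \<in> V \<Longrightarrow> le z (mul x y) \<Longrightarrow> z \<in> dmul M le mul U V"
  unfolding dmul_def by blast

lemma dmul_assoc:
  assumes mp: "monoidal_poset M le mul one" and U: "U \<in> DS M le" and V: "V \<in> DS M le" and W: "W \<in> DS M le"
  shows "dmul M le mul (dmul M le mul U V) W = dmul M le mul U (dmul M le mul V W)"
proof -
  note f = mp_facts[OF mp]
  have UM: "U \<subseteq> M" and VM: "V \<subseteq> M" and WM: "W \<subseteq> M" using U V W unfolding DS_def by auto
  show ?thesis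
  proof (rule set_eqI, rule iffI)
    fix z assume "z \<in> dmul M le mul (dmul M le mul U V) W"
    then obtain t w x y where z: "z \<in> M" and tM: "t \<in> M" and wW: "w \<in> W" and zt: "le z (mul t w)"
      and xU: "x \<in> U" and yV: "y \<in> V" and txy: "le t (mul x y)"
      unfolding dmul_def by blast
    have xM: "x \<in> M" and yM: "y \<in> M" and wM: "w \<in> M" using xU yV wW UM VM WM by auto
    have xyM: "mul x y \<in> M" by (rule f(5)[OF xM yM])
    have ywM: "mul y w \<in> M" by (rule f(5)[OF yM wM])
    have twM: "mul t w \<in> M" by (rule f(5)[OF tM wM])
    have 1: "le (mul t w) (mul (mul x y) w)" by (rule f(9)[OF tM xyM wM txy])
    have 2: "le z (mul (mul x y) w)" by (rule f(2)[OF z twM f(5)[OF xyM wM] zt 1])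
    have 3: "le z (mul x (mul y w))" using 2 f(6)[OF xM yM wM] by simp
    have 4: "mul y w \<in> dmul M le mul V W" unfolding dmul_def using ywM f(1)[OF ywM] yV wW by blast
    show "z \<in> dmul M le mul U (dmul M le mul V W)" using z xU 4 3 by (rule dmul_I)
  next
    fix z assume "z \<in> dmul M le mul U (dmul M le mul V W)"
    then obtain t w x y where z: "z \<in> M" and tM: "t \<in> M" and xU: "x \<in> U" and zt: "le z (mul x t)"
      and yV: "y \<in> V" and wW: "w \<in> W" and tyw: "le t (mul y w)"
      unfolding dmul_def by blast
    have xM: "x \<in> M" and yM: "y \<in> M" and wM: "w \<in> M" using xU yV wW UM VM WM by auto
    have xyM: "mul x y \<in> M" by (rule f(5)[OF xM yM])
    have ywM: "mul y w \<in> M" by (rule f(5)[OF yM wM])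
    have xtM: "mul x t \<in> M" by (rule f(5)[OF xM tM])
    have 1: "le (mul x t) (mul x (mul y w))" by (rule f(10)[OF tM ywM xM tyw])
    have 2: "le z (mul x (mul y w))" by (rule f(2)[OF z xtM f(5)[OF xM ywM] zt 1])
    have 3: "le z (mul (mul x y) w)" using 2 f(6)[OF xM yM wM] by simp
    have 4: "mul x y \<in> dmul M le mul U V" unfolding dmul_def using xyM f(1)[OF xyM] xU yV by blast
    show "z \<in> dmul M le mul (dmul M le mul U V) W" using z 4 wW 3 by (rule dmul_I)
  qed
qed

lemma dmul_unitL:
  assumes mp: "monoidal_poset M le mul one" and U: "U \<in> DS M le"
  shows "dmul M le mul (dunit M le one) U = U"
proof -
  note f = mp_facts[OF mp]
  have UM: "U \<subseteq> M" using U unfolding DS_def by auto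
  show ?thesis
  proof (rule set_eqI, rule iffI)
    fix z assume "z \<in> dmul M le mul (dunit M le one) U"
    then obtain t u where z: "z \<in> M" and tM: "t \<in> M" and t1: "le t one" and uU: "u \<in> U" and zt: "le z (mul t u)"
      unfolding dmul_def dunit_def by blast
    have uM: "u \<in> M" using uU UM by auto
    have "le (mul t u) (mul one u)" by (rule f(9)[OF tM f(4) uM t1])
    then have 1: "le (mul t u) u" using f(7)[OF uM] by simp
    have "le z u" by (rule f(2)[OF z f(5)[OF tM uM] uM zt 1])
    then show "z \<in> U" using U z uU unfolding DS_def by blast
  next
    fix z assume zU: "z \<in> U"
    then have zM: "z \<in> M" using UM by auto
    have "le z (mul one z)" using f(7)[OF zM] f(1)[OF zM] by simp
    moreover have "one \<in> dunit M le one" unfolding dunit_def using f(4) f(1)[OF f(4)] by simp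
    ultimately show "z \<in> dmul M le mul (dunit M le one) U" unfolding dmul_def using zM zU by blast
  qed
qed

lemma dmul_unitR:
  assumes mp: "monoidal_poset M le mul one" and U: "U \<in> DS M le"
  shows "dmul M le mul U (dunit M le one) = U"
proof -
  note f = mp_facts[OF mp]
  have UM: "U \<subseteq> M" using U unfolding DS_def by auto
  show ?thesis
  proof (rule set_eqI, rule iffI)
    fix z assume "z \<in> dmul M le mul U (dunit M le one)"
    then obtain t u where z: "z \<in> M" and tM: "t \<in> M" and t1: "le t one" and uU: "u \<in> U" and zt: "le z (mul u t)"
      unfolding dmul_def dunit_def by blast
    have uM: "u \<in> M" using uU UM by auto
    have "le (mul u t) (mul u one)" by (rule f(10)[OF tM f(4) uM t1])
    then have 1: "le (mul u t) u" using f(8)[OF uM] by simp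
    have "le z u" by (rule f(2)[OF z f(5)[OF uM tM] uM zt 1])
    then show "z \<in> U" using U z uU unfolding DS_def by blast
  next
    fix z assume zU: "z \<in> U"
    then have zM: "z \<in> M" using UM by auto
    have "le z (mul z one)" using f(8)[OF zM] f(1)[OF zM] by simp
    moreover have "one \<in> dunit M le one" unfolding dunit_def using f(4) f(1)[OF f(4)] by simp
    ultimately show "z \<in> dmul M le mul U (dunit M le one)" unfolding dmul_def using zM zU by blast
  qed
qed

lemma dmul_mono:
  "U \<subseteq> U' \<Longrightarrow> V \<subseteq> V' \<Longrightarrow> dmul M le mul U V \<subseteq> dmul M le mul U' V'"
  unfolding dmul_def by blast

lemma DS_quantale:
  assumes mp: "monoidal_poset M le mul one"
  shows "quantale (DS M le) (\<subseteq>) (dmul M le mul) (dunit M le one)"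
proof -
  have sub: "\<And>U. U \<in> DS M le \<Longrightarrow> U \<subseteq> M" unfolding DS_def by auto
  have mpD: "monoidal_poset (DS M le) (\<subseteq>) (dmul M le mul) (dunit M le one)"
    unfolding monoidal_poset_def partial_order_on'_def
  proof (intro conjI ballI impI allI)
    show "dunit M le one \<in> DS M le" using dunit_DS[OF mp] .
  next
    fix a b assume "a \<in> DS M le" "b \<in> DS M le"
    then show "dmul M le mul a b \<in> DS M le" using dmul_DS[OF mp] sub by blast
  next
    fix a b c assume "a \<in> DS M le" "b \<in> DS M le" "c \<in> DS M le"
    then show "dmul M le mul (dmul M le mul a b) c = dmul M le mul a (dmul M le mul b c)"
      using dmul_assoc[OF mp] by blast
  next
    fix a assume "a \<in> DS M le"
    then show "dmul M le mul (dunit M le one) a = a" using dmul_unitL[OF mp] by blast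
  next
    fix a assume "a \<in> DS M le"
    then show "dmul M le mul a (dunit M le one) = a" using dmul_unitR[OF mp] by blast
  qed (auto simp: dmul_mono)
  have lubs: "\<forall>S. S \<subseteq> DS M le \<longrightarrow> (\<exists>s. is_lub (DS M le) (\<subseteq>) S s)" using lub_union by blast
  have distr: "is_lub (DS M le) (\<subseteq>) ((\<lambda>x. dmul M le mul a x) ` S) (dmul M le mul a s) \<and>
      is_lub (DS M le) (\<subseteq>) ((\<lambda>x. dmul M le mul x a) ` S) (dmul M le mul s a)"
    if a: "a \<in> DS M le" and S: "S \<subseteq> DS M le" and s: "is_lub (DS M le) (\<subseteq>) S s" for a S s
  proof -
    have s': "s = \<Union>S" using lub_eq S s by blast
    have i1: "(\<lambda>x. dmul M le mul a x) ` S \<subseteq> DS M le" using dmul_DS[OF mp] sub a S by blast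
    have i2: "(\<lambda>x. dmul M le mul x a) ` S \<subseteq> DS M le" using dmul_DS[OF mp] sub a S by blast
    have e1: "dmul M le mul a s = \<Union>((\<lambda>x. dmul M le mul a x) ` S)" unfolding s' dmul_def by blast
    have e2: "dmul M le mul s a = \<Union>((\<lambda>x. dmul M le mul x a) ` S)" unfolding s' dmul_def by blast
    show ?thesis using lub_union[OF i1] lub_union[OF i2] e1 e2 by simp
  qed
  show ?thesis unfolding quantale_def using mpD lubs distr by blast
qed

lemma DS_spacetime:
  assumes mp: "monoidal_poset M le mul one"
  shows "nc_spacetime (DS M le) (\<subseteq>) (dmul M le mul) (dunit M le one) (\<lambda>x. x)"
  unfolding nc_spacetime_def using DS_quantale[OF mp] by simp

lemma box_id:
  assumes "x \<in> X"
  shows "st_box X (\<subseteq>) (\<lambda>x. x) x = x"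
  unfolding st_box_def using assms by (intro the_equality) auto

lemma res_char:
  assumes "y \<in> X" "mX a y \<subseteq> b" "\<forall>z\<in>X. mX a z \<subseteq> b \<longrightarrow> z \<subseteq> y"
  shows "st_res X (\<subseteq>) mX a b = y"
  unfolding st_res_def using assms by (intro the_equality) auto


lemma sa_facts:
  assumes "strong_algebra A le m e imp"
  shows "monoidal_poset A le m e"
    and "\<And>a b. a\<in>A \<Longrightarrow> b\<in>A \<Longrightarrow> imp a b \<in> A"
    and "\<And>a a' b. a\<in>A \<Longrightarrow> a'\<in>A \<Longrightarrow> b\<in>A \<Longrightarrow> le a a' \<Longrightarrow> le (imp a' b) (imp a b)"
    and "\<And>a b b'. a\<in>A \<Longrightarrow> b\<in>A \<Longrightarrow> b'\<in>A \<Longrightarrow> le b b' \<Longrightarrow> le (imp a b) (imp a b')"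
    and "\<And>a. a\<in>A \<Longrightarrow> le e (imp a a)"
    and "\<And>a b c. a\<in>A \<Longrightarrow> b\<in>A \<Longrightarrow> c\<in>A \<Longrightarrow> le (m (imp a b) (imp b c)) (imp a c)"
proof -
  note C = assms[unfolded strong_algebra_def]
  show "monoidal_poset A le m e" using C by (elim conjE) assumption
  have P2: "\<forall>a\<in>A. \<forall>b\<in>A. imp a b \<in> A" using C by (elim conjE) assumption
  have P3: "\<forall>a\<in>A. \<forall>a'\<in>A. \<forall>b\<in>A. le a a' \<longrightarrow> le (imp a' b) (imp a b)" using C by (elim conjE) assumption
  have P4: "\<forall>a\<in>A. \<forall>b\<in>A. \<forall>b'\<in>A. le b b' \<longrightarrow> le (imp a b) (imp a b')" using C by (elim conjE) assumption
  have P5: "\<forall>a\<in>A. le e (imp a a)" using C by (elim conjE) assumption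
  have P6: "\<forall>a\<in>A. \<forall>b\<in>A. \<forall>c\<in>A. le (m (imp a b) (imp b c)) (imp a c)" using C by (elim conjE) assumption
  show "\<And>a b. a\<in>A \<Longrightarrow> b\<in>A \<Longrightarrow> imp a b \<in> A" using P2 by blast
  show "\<And>a a' b. a\<in>A \<Longrightarrow> a'\<in>A \<Longrightarrow> b\<in>A \<Longrightarrow> le a a' \<Longrightarrow> le (imp a' b) (imp a b)" using P3 by blast
  show "\<And>a b b'. a\<in>A \<Longrightarrow> b\<in>A \<Longrightarrow> b'\<in>A \<Longrightarrow> le b b' \<Longrightarrow> le (imp a b) (imp a b')" using P4 by blast
  show "\<And>a. a\<in>A \<Longrightarrow> le e (imp a a)" using P5 by blast
  show "\<And>a b c. a\<in>A \<Longrightarrow> b\<in>A \<Longrightarrow> c\<in>A \<Longrightarrow> le (m (imp a b) (imp b c)) (imp a c)" using P6 by blast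
qed

fun wmul :: "'a option option \<Rightarrow> 'a option option \<Rightarrow> 'a option option" where
  "wmul None v = v"
| "wmul (Some w) None = Some w"
| "wmul (Some w) (Some v) = Some None"

lemma wmul_None2[simp]: "wmul w None = w"
  by (cases w) auto

lemma wmul_assoc: "wmul (wmul u v) w = wmul u (wmul v w)"
  by (cases u; cases v; cases w) auto

definition enc :: "'a \<times> 'a option option \<Rightarrow> ('a + nat) list set" where
  "enc p = (case p of (x, None) \<Rightarrow> {[Inl x]} | (x, Some None) \<Rightarrow> {[Inl x, Inr 0]}
              | (x, Some (Some q)) \<Rightarrow> {[Inl x, Inl q]})"

lemma enc_inj: "inj enc"
proof (rule injI)
  fix p q :: "'a \<times> 'a option option"
  assume h: "enc p = enc q"
  obtain x w where p: "p = (x, w)" by (cases p)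
  obtain y v where q: "q = (y, v)" by (cases q)
  show "p = q" using h unfolding p q enc_def
    by (cases w; cases v; auto split: option.splits)
qed

definition leP :: "('a \<Rightarrow> 'a \<Rightarrow> bool) \<Rightarrow> 'a \<times> 'a option option \<Rightarrow> 'a \<times> 'a option option \<Rightarrow> bool" where
  "leP le p q = (le (fst p) (fst q) \<and> snd p = snd q)"

definition mulP :: "('a \<Rightarrow> 'a \<Rightarrow> 'a) \<Rightarrow> 'a \<times> 'a option option \<Rightarrow> 'a \<times> 'a option option \<Rightarrow> 'a \<times> 'a option option" where
  "mulP m p q = (m (fst p) (fst q), wmul (snd p) (snd q))"

lemma mp_P:
  assumes mp: "monoidal_poset A le m e"
  shows "monoidal_poset (A \<times> UNIV) (leP le) (mulP m) (e, None)"
proof -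
  note f = mp_facts[OF mp]
  show ?thesis unfolding monoidal_poset_def partial_order_on'_def
  proof (intro conjI ballI impI)
    fix a assume "a \<in> A \<times> (UNIV :: 'a option option set)"
    then show "leP le a a" unfolding leP_def using f(1) by auto
  next
    fix a b c :: "'a \<times> 'a option option"
    assume "a \<in> A \<times> UNIV" "b \<in> A \<times> UNIV" "c \<in> A \<times> UNIV" "leP le a b" "leP le b c"
    then show "leP le a c" unfolding leP_def using f(2)[of "fst a" "fst b" "fst c"] by auto
  next
    fix a b :: "'a \<times> 'a option option"
    assume "a \<in> A \<times> UNIV" "b \<in> A \<times> UNIV" "leP le a b" "leP le b a"
    then show "a = b" unfolding leP_def using f(3)[of "fst a" "fst b"] by (auto simp: prod_eq_iff)
  next
    show "(e, None) \<in> A \<times> (UNIV :: 'a option option set)" using f(4) by simp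
  next
    fix a b :: "'a \<times> 'a option option"
    assume "a \<in> A \<times> UNIV" "b \<in> A \<times> UNIV"
    then show "mulP m a b \<in> A \<times> UNIV" unfolding mulP_def using f(5) by auto
  next
    fix a b c :: "'a \<times> 'a option option"
    assume "a \<in> A \<times> UNIV" "b \<in> A \<times> UNIV" "c \<in> A \<times> UNIV"
    then show "mulP m (mulP m a b) c = mulP m a (mulP m b c)" unfolding mulP_def
      using f(6)[of "fst a" "fst b" "fst c"] wmul_assoc by auto
  next
    fix a :: "'a \<times> 'a option option"
    assume "a \<in> A \<times> UNIV"
    then show "mulP m (e, None) a = a" unfolding mulP_def using f(7)[of "fst a"] by auto
  next
    fix a :: "'a \<times> 'a option option"
    assume "a \<in> A \<times> UNIV"
    then show "mulP m a (e, None) = a" unfolding mulP_def using f(8)[of "fst a"] by auto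
  next
    fix a a' b :: "'a \<times> 'a option option"
    assume "a \<in> A \<times> UNIV" "a' \<in> A \<times> UNIV" "b \<in> A \<times> UNIV" "leP le a a'"
    then show "leP le (mulP m a b) (mulP m a' b)" unfolding leP_def mulP_def
      using f(9)[of "fst a" "fst a'" "fst b"] by auto
  next
    fix a a' b :: "'a \<times> 'a option option"
    assume "a \<in> A \<times> UNIV" "a' \<in> A \<times> UNIV" "b \<in> A \<times> UNIV" "leP le a a'"
    then show "leP le (mulP m b a) (mulP m b a')" unfolding leP_def mulP_def
      using f(10)[of "fst a" "fst a'" "fst b"] by auto
  qed
qed

lemma mp_transfer:
  assumes mp: "monoidal_poset P le' mul' one'" and inj: "inj f"
  shows "monoidal_poset (f ` P) (\<lambda>s t. le' (inv f s) (inv f t)) (\<lambda>s t. f (mul' (inv f s) (inv f t))) (f one')"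
proof -
  note g = mp_facts[OF mp]
  have iv[simp]: "\<And>x. inv f (f x) = x" using inj by (simp add: inv_f_f)
  show ?thesis unfolding monoidal_poset_def partial_order_on'_def
  proof (intro conjI ballI impI)
    fix a assume "a \<in> f ` P"
    then obtain p where "p \<in> P" "a = f p" by blast
    then show "le' (inv f a) (inv f a)" using g(1)[of p] by simp
  next
    fix a b c assume "a \<in> f ` P" "b \<in> f ` P" "c \<in> f ` P" "le' (inv f a) (inv f b)" "le' (inv f b) (inv f c)"
    then obtain p q r where "p \<in> P" "a = f p" "q \<in> P" "b = f q" "r \<in> P" "c = f r"
      "le' p q" "le' q r" by auto
    then show "le' (inv f a) (inv f c)" using g(2)[of p q r] by simp
  next
    fix a b assume "a \<in> f ` P" "b \<in> f ` P" "le' (inv f a) (inv f b)" "le' (inv f b) (inv f a)"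
    then obtain p q where "p \<in> P" "a = f p" "q \<in> P" "b = f q" "le' p q" "le' q p" by auto
    then show "a = b" using g(3)[of p q] by simp
  next
    show "f one' \<in> f ` P" using g(4) by simp
  next
    fix a b assume "a \<in> f ` P" "b \<in> f ` P"
    then obtain p q where "p \<in> P" "a = f p" "q \<in> P" "b = f q" by auto
    then show "f (mul' (inv f a) (inv f b)) \<in> f ` P" using g(5)[of p q] by simp
  next
    fix a b c assume "a \<in> f ` P" "b \<in> f ` P" "c \<in> f ` P"
    then obtain p q r where "p \<in> P" "a = f p" "q \<in> P" "b = f q" "r \<in> P" "c = f r" by auto
    then show "f (mul' (inv f (f (mul' (inv f a) (inv f b)))) (inv f c)) =
               f (mul' (inv f a) (inv f (f (mul' (inv f b) (inv f c)))))" using g(6)[of p q r] by simp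
  next
    fix a assume "a \<in> f ` P"
    then obtain p where "p \<in> P" "a = f p" by blast
    then show "f (mul' (inv f (f one')) (inv f a)) = a" using g(7)[of p] by simp
  next
    fix a assume "a \<in> f ` P"
    then obtain p where "p \<in> P" "a = f p" by blast
    then show "f (mul' (inv f a) (inv f (f one'))) = a" using g(8)[of p] by simp
  next
    fix a a' b assume "a \<in> f ` P" "a' \<in> f ` P" "b \<in> f ` P" "le' (inv f a) (inv f a')"
    then obtain p q r where "p \<in> P" "a = f p" "q \<in> P" "a' = f q" "r \<in> P" "b = f r" "le' p q" by auto
    then show "le' (inv f (f (mul' (inv f a) (inv f b)))) (inv f (f (mul' (inv f a') (inv f b))))"
      using g(9)[of p q r] by simp
  next
    fix a a' b assume "a \<in> f ` P" "a' \<in> f ` P" "b \<in> f ` P" "le' (inv f a) (inv f a')"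
    then obtain p q r where "p \<in> P" "a = f p" "q \<in> P" "a' = f q" "r \<in> P" "b = f r" "le' p q" by auto
    then show "le' (inv f (f (mul' (inv f b) (inv f a)))) (inv f (f (mul' (inv f b) (inv f a'))))"
      using g(10)[of p q r] by simp
  qed
qed

theorem theorem6p1:
  fixes A :: "'a set" and le :: "'a \<Rightarrow> 'a \<Rightarrow> bool" and m :: "'a \<Rightarrow> 'a \<Rightarrow> 'a"
    and e :: 'a and imp :: "'a \<Rightarrow> 'a \<Rightarrow> 'a"
  assumes "strong_algebra A le m e imp"
  shows "\<exists>(X :: ('a + nat) list set set set) leX mX eX nabla F i.
           nc_spacetime X leX mX eX nabla \<and>
           (\<forall>x\<in>X. F x \<in> X) \<and> (\<forall>x\<in>X. \<forall>y\<in>X. leX x y \<longrightarrow> leX (F x) (F y)) \<and>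
           strict_monoidal_order_embedding A le m e X leX mX eX i \<and>
           (\<forall>a\<in>A. \<forall>b\<in>A. i (imp a b) = st_imp X leX mX nabla (F (i a)) (F (i b)))"
proof -
  note sa = sa_facts[OF assms]
  note f = mp_facts[OF sa(1)]
  define MM where "MM = enc ` (A \<times> (UNIV :: 'a option option set))"
  define leM where "leM = (\<lambda>s t. leP le (inv enc s) (inv enc t))"
  define mulM where "mulM = (\<lambda>s t. enc (mulP m (inv enc s) (inv enc t)))"
  define oneM where "oneM = enc (e, (None :: 'a option option))"
  have mpM: "monoidal_poset MM leM mulM oneM" unfolding MM_def leM_def mulM_def oneM_def
    by (rule mp_transfer[OF mp_P[OF sa(1)] enc_inj])
  have iv[simp]: "inv enc (enc p) = p" for p :: "'a \<times> 'a option option" by (rule inv_f_f[OF enc_inj])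
  have enc_eq[simp]: "enc p = enc q \<longleftrightarrow> p = q" for p q :: "'a \<times> 'a option option"
    by (rule inj_eq[OF enc_inj])
  have leM_enc[simp]: "leM (enc (x,w)) (enc (y,v)) \<longleftrightarrow> le x y \<and> w = v" for x y w v
    unfolding leM_def leP_def by simp
  have mulM_enc[simp]: "mulM (enc (x,w)) (enc (y,v)) = enc (m x y, wmul w v)" for x y w v
    unfolding mulM_def mulP_def by simp
  have MM_enc[simp]: "enc (x,w) \<in> MM \<longleftrightarrow> x \<in> A" for x w
    unfolding MM_def by (auto simp: inj_image_mem_iff[OF enc_inj])
  have MM_cases: "\<exists>x w. x \<in> A \<and> z = enc (x,w)" if "z \<in> MM" for z
    using that unfolding MM_def by auto
  define X where "X = DS MM leM"
  define iE where "iE = (\<lambda>a. {enc (x, (None :: 'a option option)) | x. x \<in> A \<and> le x a})"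
  define FF where "FF = (\<lambda>U. {enc (x, Some (Some p)) | x p. x \<in> A \<and> p \<in> A \<and>
                      (\<exists>b\<in>A. enc (b, None) \<in> U \<and> le x (imp p b))})"
  define mX where "mX = dmul MM leM mulM"
  define eX where "eX = dunit MM leM oneM"
  have DSI: "U \<in> X" if "U \<subseteq> MM" "\<And>x y. x \<in> U \<Longrightarrow> y \<in> MM \<Longrightarrow> leM y x \<Longrightarrow> y \<in> U" for U
    using that unfolding X_def DS_def by blast
  have XM: "U \<subseteq> MM" if "U \<in> X" for U using that unfolding X_def DS_def by blast
  have iE_mem: "z \<in> iE a \<longleftrightarrow> (\<exists>x. z = enc (x, None) \<and> x \<in> A \<and> le x a)" for z a
    unfolding iE_def by blast
  have iE_I: "enc (x, None) \<in> iE a" if "x \<in> A" "le x a" for x a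
    unfolding iE_def using that by blast
  have iE_refl: "enc (a, None) \<in> iE a" if "a \<in> A" for a using iE_I[OF that f(1)[OF that]] .
  have FF_mem: "z \<in> FF U \<longleftrightarrow> (\<exists>x p. z = enc (x, Some (Some p)) \<and> x \<in> A \<and> p \<in> A \<and>
                      (\<exists>b\<in>A. enc (b, None) \<in> U \<and> le x (imp p b)))" for z U
    unfolding FF_def by blast
  have iX: "iE a \<in> X" if a: "a \<in> A" for a
  proof (rule DSI)
    show "iE a \<subseteq> MM" unfolding iE_def by auto
  next
    fix x y assume x: "x \<in> iE a" and y: "y \<in> MM" and yx: "leM y x"
    obtain x0 where x0: "x = enc (x0, None)" "x0 \<in> A" "le x0 a" using x unfolding iE_mem by blast
    obtain y0 w where y0: "y0 \<in> A" "y = enc (y0, w)" using MM_cases[OF y] by blast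
    have "le y0 x0" "w = None" using yx x0 y0 by auto
    then have "le y0 a" using f(2)[of y0 x0 a] x0 y0 a by blast
    then show "y \<in> iE a" unfolding iE_mem using y0(1) by (simp add: y0(2) \<open>w = None\<close>)
  qed
  have FX: "FF U \<in> X" for U
  proof (rule DSI)
    show "FF U \<subseteq> MM" unfolding FF_def by auto
  next
    fix x y assume x: "x \<in> FF U" and y: "y \<in> MM" and yx: "leM y x"
    obtain x0 p b where x0: "x = enc (x0, Some (Some p))" "x0 \<in> A" "p \<in> A" "b \<in> A"
      "enc (b, None) \<in> U" "le x0 (imp p b)" using x unfolding FF_mem by blast
    obtain y0 w where y0: "y0 \<in> A" "y = enc (y0, w)" using MM_cases[OF y] by blast
    have "le y0 x0" "w = Some (Some p)" using yx x0 y0 by auto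
    then have "le y0 (imp p b)" using f(2)[of y0 x0 "imp p b"] x0 y0 sa(2)[of p b] by blast
    then show "y \<in> FF U" unfolding FF_mem using y0(1) x0(3,4,5) by (auto simp add: y0(2) \<open>w = Some (Some p)\<close>)
  qed
  have Fmono: "FF U \<subseteq> FF V" if "U \<subseteq> V" for U V using that unfolding FF_def by blast
  have emb: "strict_monoidal_order_embedding A le m e X (\<subseteq>) mX eX iE"
    unfolding strict_monoidal_order_embedding_def
  proof (intro conjI ballI)
    show "\<And>a. a \<in> A \<Longrightarrow> iE a \<in> X" using iX by blast
  next
    show "iE e = eX"
    proof (rule set_eqI)
      fix z
      show "z \<in> iE e \<longleftrightarrow> z \<in> eX"
      proof
        assume "z \<in> iE e" then show "z \<in> eX" unfolding eX_def dunit_def oneM_def iE_mem by auto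
      next
        assume z: "z \<in> eX"
        then have zM: "z \<in> MM" and ze: "leM z (enc (e, None))" unfolding eX_def dunit_def oneM_def by auto
        obtain x w where "x \<in> A" "z = enc (x, w)" using MM_cases[OF zM] by blast
        then show "z \<in> iE e" using ze unfolding iE_mem by auto
      qed
    qed
  next
    fix a b assume a: "a \<in> A" and b: "b \<in> A"
    show "iE (m a b) = mX (iE a) (iE b)"
    proof (rule set_eqI, rule iffI)
      fix z assume "z \<in> iE (m a b)"
      then obtain x where x: "z = enc (x, None)" "x \<in> A" "le x (m a b)" unfolding iE_mem by blast
      have "enc (a, None) \<in> iE a" "enc (b, None) \<in> iE b" using iE_refl a b by auto
      moreover have "leM z (mulM (enc (a, None)) (enc (b, None)))" using x by simp
      moreover have "z \<in> MM" using x by simp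
      ultimately show "z \<in> mX (iE a) (iE b)" unfolding mX_def by (meson dmul_I)
    next
      fix z assume "z \<in> mX (iE a) (iE b)"
      then obtain u v where z: "z \<in> MM" "u \<in> iE a" "v \<in> iE b" "leM z (mulM u v)"
        unfolding mX_def dmul_def by blast
      obtain x1 where x1: "u = enc (x1, None)" "x1 \<in> A" "le x1 a" using z(2) unfolding iE_mem by blast
      obtain y1 where y1: "v = enc (y1, None)" "y1 \<in> A" "le y1 b" using z(3) unfolding iE_mem by blast
      obtain z0 w where z0: "z0 \<in> A" "z = enc (z0, w)" using MM_cases[OF z(1)] by blast
      have zz: "le z0 (m x1 y1)" "w = None" using z(4) x1 y1 z0 by auto
      have "le (m x1 y1) (m a y1)" using f(9) x1 y1 a by blast
      moreover have "le (m a y1) (m a b)" using f(10) y1 a b by blast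
      ultimately have "le (m x1 y1) (m a b)" using f(2) f(5) a b x1 y1 by meson
      then have "le z0 (m a b)" using f(2) f(5) a b x1 y1 z0 zz by meson
      then show "z \<in> iE (m a b)" using iE_I z0 zz by simp
    qed
  next
    fix a b assume a: "a \<in> A" and b: "b \<in> A"
    show "le a b \<longleftrightarrow> iE a \<subseteq> iE b"
    proof
      assume ab: "le a b"
      show "iE a \<subseteq> iE b"
      proof
        fix z assume "z \<in> iE a"
        then obtain x where "z = enc (x, None)" "x \<in> A" "le x a" unfolding iE_mem by blast
        then show "z \<in> iE b" using f(2)[of x a b] a b ab iE_I by blast
      qed
    next
      assume "iE a \<subseteq> iE b"
      moreover have "enc (a, None) \<in> iE a" using iE_refl a by auto
      ultimately have "enc (a, None) \<in> iE b" by blast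
      then show "le a b" unfolding iE_mem by auto
    qed
  qed
  have impeq: "iE (imp a b) = st_imp X (\<subseteq>) mX (\<lambda>x. x) (FF (iE a)) (FF (iE b))"
    if a: "a \<in> A" and b: "b \<in> A" for a b
  proof -
    define c where "c = imp a b"
    have c: "c \<in> A" unfolding c_def using sa(2) a b by blast
    have r: "st_res X (\<subseteq>) mX (FF (iE a)) (FF (iE b)) = iE c"
    proof (rule res_char)
      show "iE c \<in> X" using iX c by blast
    next
      show "mX (FF (iE a)) (iE c) \<subseteq> FF (iE b)"
      proof
        fix z assume "z \<in> mX (FF (iE a)) (iE c)"
        then obtain u v where z: "z \<in> MM" "u \<in> FF (iE a)" "v \<in> iE c" "leM z (mulM u v)"
          unfolding mX_def dmul_def by blast
        obtain x p b' where u: "u = enc (x, Some (Some p))" "x \<in> A" "p \<in> A" "b' \<in> A"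
          "enc (b', None) \<in> iE a" "le x (imp p b')" using z(2) unfolding FF_mem by blast
        have b'a: "le b' a" using u(5) unfolding iE_mem by auto
        obtain y where v: "v = enc (y, None)" "y \<in> A" "le y c" using z(3) unfolding iE_mem by blast
        obtain z0 w where z0: "z0 \<in> A" "z = enc (z0, w)" using MM_cases[OF z(1)] by blast
        have zz: "le z0 (m x y)" "w = Some (Some p)" using z(4) u v z0 by auto
        have pA: "imp p a \<in> A" "imp p b' \<in> A" "imp p b \<in> A" using sa(2) u a b by auto
        have "le (imp p b') (imp p a)" using sa(4) u b'a a by blast
        then have xle: "le x (imp p a)" using f(2) u pA by blast
        have 1: "le (m x y) (m (imp p a) y)" using f(9) xle u v pA by blast
        have 2: "le (m (imp p a) y) (m (imp p a) c)" using f(10) v c pA by blast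
        have 3: "le (m (imp p a) c) (imp p b)" unfolding c_def using sa(6) u a b by blast
        have m1: "m x y \<in> A" "m (imp p a) y \<in> A" "m (imp p a) c \<in> A" using f(5) u v pA c by auto
        have "le (m x y) (m (imp p a) c)" using f(2) 1 2 m1 by blast
        then have "le (m x y) (imp p b)" using f(2) 3 m1 pA by blast
        then have "le z0 (imp p b)" using f(2) zz m1 pA z0 by blast
        moreover have "enc (b, None) \<in> iE b" using iE_refl b by auto
        ultimately show "z \<in> FF (iE b)" unfolding FF_mem using z0(1) u(3) b by (auto simp: z0(2) zz(2))
      qed
    next
      show "\<forall>z\<in>X. mX (FF (iE a)) z \<subseteq> FF (iE b) \<longrightarrow> z \<subseteq> iE c"
      proof (intro ballI impI subsetI)
        fix Z t assume ZX: "Z \<in> X" and sub: "mX (FF (iE a)) Z \<subseteq> FF (iE b)" and tZ: "t \<in> Z"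
        have tM: "t \<in> MM" using XM[OF ZX] tZ by blast
        obtain y w where y: "y \<in> A" "t = enc (y, w)" using MM_cases[OF tM] by blast
        have "enc (a, None) \<in> iE a" using iE_refl a by auto
        then have uF: "enc (e, Some (Some a)) \<in> FF (iE a)" unfolding FF_mem using f(4) a sa(5) by blast
        have prod: "mulM (enc (e, Some (Some a))) t = enc (y, wmul (Some (Some a)) w)"
          using y f(7) by simp
        have pM: "enc (y, wmul (Some (Some a)) w) \<in> MM" using y by simp
        have "le (fst (y, wmul (Some (Some a)) w)) y" using f(1) y by simp
        then have "leM (enc (y, wmul (Some (Some a)) w)) (mulM (enc (e, Some (Some a))) t)"
          using prod by simp
        then have "enc (y, wmul (Some (Some a)) w) \<in> mX (FF (iE a)) Z"
          unfolding mX_def using pM uF tZ by (meson dmul_I)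
        then have "enc (y, wmul (Some (Some a)) w) \<in> FF (iE b)" using sub by blast
        then obtain x p b' where h: "enc (y, wmul (Some (Some a)) w) = enc (x, Some (Some p))"
          "p \<in> A" "b' \<in> A" "enc (b', None) \<in> iE b" "le x (imp p b')" unfolding FF_mem by blast
        have hw: "wmul (Some (Some a)) w = Some (Some p)" "x = y" using h(1) by auto
        have wN: "w = None" "p = a" using hw(1) by (cases w; auto)+
        have "le b' b" using h(4) unfolding iE_mem by auto
        then have "le (imp a b') (imp a b)" using sa(4) a b h(3) by blast
        then have "le y c" unfolding c_def using f(2) h(5) hw(2) wN(2) y sa(2) a b h(3) by metis
        then show "t \<in> iE c" using iE_I y wN by simp
      qed
    qed
    show ?thesis unfolding st_imp_def r c_def[symmetric] using box_id[OF iX[OF c]] by simp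
  qed
  show ?thesis
  proof (intro exI conjI)
    show "nc_spacetime X (\<subseteq>) mX eX (\<lambda>x. x)" unfolding X_def mX_def eX_def by (rule DS_spacetime[OF mpM])
    show "\<forall>x\<in>X. FF x \<in> X" using FX by blast
    show "\<forall>x\<in>X. \<forall>y\<in>X. x \<subseteq> y \<longrightarrow> FF x \<subseteq> FF y" using Fmono by blast
    show "strict_monoidal_order_embedding A le m e X (\<subseteq>) mX eX iE" by (rule emb)
    show "\<forall>a\<in>A. \<forall>b\<in>A. iE (imp a b) = st_imp X (\<subseteq>) mX (\<lambda>x. x) (FF (iE a)) (FF (iE b))"
      using impeq by blast
  qed
qed

end
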